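(* Let $n\in\mathbb N$, $\varphi_1\in C_0^{[n/2]+2}(\mathbb R^n)$, and $\psi(x,t)=\frac32\int_0^1 v_{\varphi_1}(x,3t^{1/3}s)(1-s^2)\,ds$ for $x\in\mathbb R^n$, $t>0$. Then \[ \psi_{tt}-t^{-4/3}\Delta\psi+2t^{-1}\psi_t=0\quad(t>0,\ x\in\mathbb R^n),\qquad \lim_{t\to0}t\psi(x,t)=0,\quad \lim_{t\to0}\big(t\psi_t(x,t)+\psi(x,t)\big)=\varphi_1(x). \]
   Context: $\Delta=\sum_{i=1}^n\partial_{x_i}^2$, $[n/2]$ is the integer part of $n/2$. For $\varphi=\varphi(x)$, $v_\varphi(x,r)$ denotes the solution $v$ of the free wave equation $v_{rr}-\Delta v=0$, $v(x,0)=\varphi(x)$, $v_r(x,0)=0$, evaluated at time $r$. *)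

theory Defs
  imports "HOL-Analysis.Analysis"
begin

fun Ck_on :: "nat \<Rightarrow> 'a::euclidean_space set \<Rightarrow> ('a \<Rightarrow> real) \<Rightarrow> bool" where
  "Ck_on 0 S f = continuous_on S f"
| "Ck_on (Suc k) S f =
     (continuous_on S f \<and> (\<forall>x\<in>S. f differentiable (at x)) \<and>
      (\<forall>b\<in>Basis. Ck_on k S (\<lambda>x. frechet_derivative f (at x) b)))"

definition partial :: "('a::real_normed_vector \<Rightarrow> real) \<Rightarrow> 'a \<Rightarrow> 'a \<Rightarrow> real" where
  "partial f b x = deriv (\<lambda>h. f (x + h *\<^sub>R b)) 0"

definition laplacian :: "(real^'n \<Rightarrow> real) \<Rightarrow> real^'n \<Rightarrow> real" where
  "laplacian f x = (\<Sum>i\<in>UNIV. partial (partial f (axis i 1)) (axis i 1) x)"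

definition wave_solution :: "(real^'n \<Rightarrow> real) \<Rightarrow> (real^'n \<Rightarrow> real \<Rightarrow> real) \<Rightarrow> bool" where
  "wave_solution \<phi> v \<longleftrightarrow>
     Ck_on 2 UNIV (\<lambda>p. v (fst p) (snd p)) \<and>
     (\<forall>x r. deriv (\<lambda>\<rho>. deriv (\<lambda>\<sigma>. v x \<sigma>) \<rho>) r - laplacian (\<lambda>y. v y r) x = 0) \<and>
     (\<forall>x. v x 0 = \<phi> x) \<and>
     (\<forall>x. deriv (\<lambda>r. v x r) 0 = 0)"

end

theory Submission
  imports Defs
begin

lemma frechet_eq_open:
  assumes "open U" "x \<in> U" "\<And>y. y \<in> U \<Longrightarrow> f y = g y"
  shows "frechet_derivative f (at x) = frechet_derivative g (at x)"
proof -
  have "\<And>f'. (f has_derivative f') (at x) \<longleftrightarrow> (g has_derivative f') (at x)"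
    using has_derivative_transform_within_open[OF _ assms(1,2)] assms(3) by metis
  then show ?thesis unfolding frechet_derivative_def by simp
qed

lemma differentiable_eq_open:
  assumes "open U" "x \<in> U" "\<And>y. y \<in> U \<Longrightarrow> f y = g y"
  shows "f differentiable at x \<longleftrightarrow> g differentiable at x"
  using has_derivative_transform_within_open[OF _ assms(1,2)] assms(3)
  unfolding differentiable_def by metis

lemma Ck_on_cong:
  assumes "open U" "\<And>y. y \<in> U \<Longrightarrow> f y = g y"
  shows "Ck_on k U f = Ck_on k U g"
  using assms
proof (induction k arbitrary: f g)
  case 0 then show ?case using continuous_on_cong[OF refl, of U f g] by simp
next
  case (Suc k)
  have c: "continuous_on U f = continuous_on U g"
    using continuous_on_cong[OF refl, of U f g] Suc.prems by simp
  have d: "(\<forall>x\<in>U. f differentiable at x) = (\<forall>x\<in>U. g differentiable at x)"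
  proof -
    have "x \<in> U \<Longrightarrow> f differentiable at x \<longleftrightarrow> g differentiable at x" for x
      by (rule differentiable_eq_open[OF Suc.prems(1)]) (use Suc.prems(2) in auto)
    then show ?thesis by blast
  qed
  have e: "Ck_on k U (\<lambda>x. frechet_derivative f (at x) b) = Ck_on k U (\<lambda>x. frechet_derivative g (at x) b)" for b
  proof (rule Suc.IH[OF Suc.prems(1)])
    fix y assume "y \<in> U"
    then show "frechet_derivative f (at y) b = frechet_derivative g (at y) b"
      using frechet_eq_open[OF Suc.prems(1), of y f g] Suc.prems(2) by auto
  qed
  show ?case using c d e by simp
qed

definition Phi :: "real \<Rightarrow> ((real^'n) \<times> real) \<Rightarrow> ((real^'n) \<times> real)" where
  "Phi s p = (fst p, 3 * snd p powr (1/3) * s)"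

definition J :: "(real \<Rightarrow> real \<Rightarrow> real) \<Rightarrow> ((real^'n) \<times> real \<Rightarrow> real) \<Rightarrow> (real^'n) \<times> real \<Rightarrow> real" where
  "J c g p = integral {0..1} (\<lambda>s. c (snd p) s * g (Phi s p))"

definition Dd :: "((real^'n) \<times> real \<Rightarrow> real) \<Rightarrow> (real^'n) \<times> real \<Rightarrow> (real^'n) \<times> real \<Rightarrow> real" where
  "Dd g b q = frechet_derivative g (at q) b"

lemma Phi_cont: "continuous_on ((UNIV \<times> {0<..}) \<times> {0..1}) (\<lambda>x. Phi (snd x) (fst x))"
  unfolding Phi_def
  by (intro continuous_intros continuous_on_powr) auto

lemma integrand_cont:
  fixes g :: "(real^'n) \<times> real \<Rightarrow> real" and c :: "real \<Rightarrow> real \<Rightarrow> real"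
  assumes g: "continuous_on UNIV g"
    and c: "continuous_on ({0<..} \<times> {0..1}) (\<lambda>(t,s). c t s)"
  shows "continuous_on ((UNIV \<times> {0<..}) \<times> {0..1}) (\<lambda>x. c (snd (fst x)) (snd x) * g (Phi (snd x) (fst x)))"
proof -
  have 1: "continuous_on ((UNIV \<times> {0<..}) \<times> {0..1}) (\<lambda>x. c (snd (fst x)) (snd x))"
    using continuous_on_compose2[OF c, of "(UNIV \<times> {0<..}) \<times> {0..1}" "\<lambda>x. (snd (fst x), snd x)"]
    by (force intro!: continuous_intros)
  have 2: "continuous_on ((UNIV \<times> {0<..}) \<times> {0..1}) (\<lambda>x. g (Phi (snd x) (fst x)))"
    by (rule continuous_on_compose2[OF g Phi_cont]) auto
  show ?thesis using continuous_on_mult[OF 1 2] by simp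
qed

lemma J_cont:
  fixes g :: "(real^'n) \<times> real \<Rightarrow> real" and c :: "real \<Rightarrow> real \<Rightarrow> real"
  assumes g: "continuous_on UNIV g"
    and c: "continuous_on ({0<..} \<times> {0..1}) (\<lambda>(t,s). c t s)"
  shows "continuous_on (UNIV \<times> {0<..}) (J c g)"
proof -
  have "continuous_on ((UNIV \<times> {0<..}) \<times> cbox 0 1) (\<lambda>(p, s). c (snd p) s * g (Phi s p))"
    using integrand_cont[OF g c] by (simp add: split_beta' cbox_interval)
  from integral_continuous_on_param[OF this] show ?thesis
    unfolding J_def by (simp add: cbox_interval)
qed


lemma Phi_deriv:
  assumes "snd p > 0"
  shows "((\<lambda>p. Phi s p) has_derivative (\<lambda>h. (fst h, s * snd p powr (-2/3) * snd h))) (at p)"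
proof -
  have "snd p powr (-2/3) = snd p powr (1/3 - 1)" by simp
  also have "\<dots> = snd p powr (1/3) / snd p powr 1" by (rule powr_diff)
  also have "\<dots> = snd p powr (1/3) / snd p" using assms by simp
  finally have e: "snd p powr (-2/3) = snd p powr (1/3) / snd p" .
  show ?thesis
    unfolding Phi_def
    apply (rule has_derivative_eq_rhs)
     apply (use assms in \<open>auto intro!: derivative_eq_intros\<close>)[1]
    using e by (auto simp: fun_eq_iff)
qed

definition coef :: "(real \<Rightarrow> real \<Rightarrow> real) \<Rightarrow> (real \<Rightarrow> real \<Rightarrow> real) \<Rightarrow> bool" where
  "coef c ct \<longleftrightarrow> continuous_on ({0<..} \<times> {0..1}) (\<lambda>(t,s). c t s) \<and>
     continuous_on ({0<..} \<times> {0..1}) (\<lambda>(t,s). ct t s) \<and>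
     (\<forall>t s. t > 0 \<longrightarrow> ((\<lambda>t. c t s) has_real_derivative ct t s) (at t))"

lemma coef_mult_cont:
  assumes "continuous_on ({0<..} \<times> {0..1}) (\<lambda>(t,s). c t s)"
  shows "continuous_on ({0<..} \<times> {0..1::real}) (\<lambda>(t,s). c t s * s * t powr r)"
proof -
  have "continuous_on ({0<..} \<times> {0..1::real}) (\<lambda>x. (\<lambda>(t,s). c t s) x * snd x * fst x powr r)"
    by (intro continuous_intros assms continuous_on_powr) auto
  then show ?thesis by (simp add: split_beta')
qed

lemma C1_facts:
  assumes "Ck_on 1 UNIV g"
  shows "\<And>q. g differentiable at q" "continuous_on UNIV g"
    "\<And>b. b \<in> Basis \<Longrightarrow> continuous_on UNIV (Dd g b)"
  using assms by (auto simp: Dd_def[abs_def])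

lemma Dd_linear:
  assumes "g differentiable at q"
  shows "linear (\<lambda>h. Dd g h q)"
  using assms unfolding Dd_def
  by (simp add: frechet_derivative_works has_derivative_linear)

lemma integrand_integrable:
  fixes g :: "(real^'n) \<times> real \<Rightarrow> real" and c :: "real \<Rightarrow> real \<Rightarrow> real"
  assumes g: "continuous_on UNIV g"
    and c: "continuous_on ({0<..} \<times> {0..1}) (\<lambda>(t,s). c t s)"
    and p: "snd p > 0"
  shows "(\<lambda>s. c (snd p) s * g (Phi s p)) integrable_on {0..1}"
proof -
  have "continuous_on {0..1} (\<lambda>s. c (snd (fst (p,s))) (snd (p,s)) * g (Phi (snd (p,s)) (fst (p,s))))"
    using p by (intro continuous_on_compose2[OF integrand_cont[OF g c], of _ "\<lambda>s. (p,s)"])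
      (auto intro!: continuous_intros simp: mem_Times_iff)
  then show ?thesis by (simp add: integrable_continuous_interval)
qed

lemma J_deriv:
  fixes g :: "(real^'n) \<times> real \<Rightarrow> real" and c ct :: "real \<Rightarrow> real \<Rightarrow> real"
  assumes g: "Ck_on 1 UNIV g" and cc: "coef c ct" and p: "snd p > 0"
  shows "(J c g has_derivative (\<lambda>h. integral {0..1} (\<lambda>s. ct (snd p) s * snd h * g (Phi s p)
      + c (snd p) s * Dd g (fst h, s * snd p powr (-2/3) * snd h) (Phi s p)))) (at p)"
proof -
  note gd = C1_facts(1)[OF g] and gcont = C1_facts(2)[OF g] and gc = C1_facts(3)[OF g]
  note c = cc[unfolded coef_def, THEN conjunct1] and ct = cc[unfolded coef_def, THEN conjunct2, THEN conjunct1]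
    and cd = cc[unfolded coef_def, THEN conjunct2, THEN conjunct2, rule_format]
  define U :: "((real^'n) \<times> real) set" where "U = UNIV \<times> {0<..}"
  have U: "open U" "convex U" "p \<in> U" using p
    by (auto simp: U_def open_Times convex_Times mem_Times_iff intro!: convex_real_interval)
  define F where "F p' s h = ct (snd p') s * snd h * g (Phi s p') + c (snd p') s * Dd g (fst h, s * snd p' powr (-2/3) * snd h) (Phi s p')"
    for p' :: "(real^'n) \<times> real" and s and h :: "(real^'n) \<times> real"
  have lin: "linear (F p' s)" for p' s
  proof -
    have L: "linear (\<lambda>h. Dd g h (Phi s p'))" by (rule Dd_linear[OF gd])
    show ?thesis
      unfolding F_def
    proof (rule linearI)
      fix x y :: "(real^'n) \<times> real"
      have "(fst (x + y), s * snd p' powr (-2/3) * snd (x + y)) =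
        (fst x, s * snd p' powr (-2/3) * snd x) + (fst y, s * snd p' powr (-2/3) * snd y)"
        by (simp add: algebra_simps)
      note P = this
      have A: "Dd g (fst (x + y), s * snd p' powr (-2/3) * snd (x + y)) (Phi s p') =
        Dd g (fst x, s * snd p' powr (-2/3) * snd x) (Phi s p') + Dd g (fst y, s * snd p' powr (-2/3) * snd y) (Phi s p')"
        unfolding P by (rule linear_add[OF L])
      show "ct (snd p') s * snd (x + y) * g (Phi s p') + c (snd p') s * Dd g (fst (x + y), s * snd p' powr (- 2 / 3) * snd (x + y)) (Phi s p') =
         ct (snd p') s * snd x * g (Phi s p') + c (snd p') s * Dd g (fst x, s * snd p' powr (- 2 / 3) * snd x) (Phi s p') +
         (ct (snd p') s * snd y * g (Phi s p') + c (snd p') s * Dd g (fst y, s * snd p' powr (- 2 / 3) * snd y) (Phi s p'))"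
        unfolding A by (simp add: algebra_simps)
    next
      fix r :: real and x :: "(real^'n) \<times> real"
      have "(fst (r *\<^sub>R x), s * snd p' powr (-2/3) * snd (r *\<^sub>R x)) =
        r *\<^sub>R (fst x, s * snd p' powr (-2/3) * snd x)"
        by (simp add: algebra_simps)
      note P = this
      have A: "Dd g (fst (r *\<^sub>R x), s * snd p' powr (-2/3) * snd (r *\<^sub>R x)) (Phi s p') =
        r * Dd g (fst x, s * snd p' powr (-2/3) * snd x) (Phi s p')"
        unfolding P by (rule linear_scale[OF L, simplified])
      show "ct (snd p') s * snd (r *\<^sub>R x) * g (Phi s p') + c (snd p') s * Dd g (fst (r *\<^sub>R x), s * snd p' powr (- 2 / 3) * snd (r *\<^sub>R x)) (Phi s p') =
         r *\<^sub>R (ct (snd p') s * snd x * g (Phi s p') + c (snd p') s * Dd g (fst x, s * snd p' powr (- 2 / 3) * snd x) (Phi s p'))"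
        unfolding A by (simp add: algebra_simps)
    qed
  qed
  have bl: "bounded_linear (F p' s)" for p' s
    using lin linear_conv_bounded_linear by blast
  have hd: "((\<lambda>p. c (snd p) s * g (Phi s p)) has_derivative F p' s) (at p')" if "p' \<in> U" for p' s
  proof -
    have t: "snd p' > 0" using that by (auto simp: U_def mem_Times_iff)
    have d1: "((\<lambda>p. c (snd p) s) has_derivative (\<lambda>h. ct (snd p') s * snd h)) (at p')"
    proof -
      have "((\<lambda>t. c t s) has_derivative (\<lambda>h. ct (snd p') s * h)) (at (snd p'))"
        using cd[OF t, of s] by (simp add: has_field_derivative_def)
      from has_derivative_compose[OF has_derivative_snd[OF has_derivative_ident] this]
      show ?thesis by simp
    qed
    have d2: "((\<lambda>p. g (Phi s p)) has_derivative (\<lambda>h. Dd g (fst h, s * snd p' powr (-2/3) * snd h) (Phi s p'))) (at p')"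
      using has_derivative_compose[OF Phi_deriv[OF t] frechet_derivative_works[THEN iffD1, OF gd]]
      by (simp add: Dd_def)
    show ?thesis
      using has_derivative_mult[OF d1 d2] unfolding F_def
      by (rule has_derivative_eq_rhs) (auto simp: fun_eq_iff algebra_simps)
  qed
  have Fc: "continuous_on (U \<times> cbox 0 1) (\<lambda>(p, s). Blinfun (F p s))"
  proof (rule continuous_on_blinfun_componentwise)
    fix i :: "(real^'n) \<times> real" assume i: "i \<in> Basis"
    have eq: "(\<lambda>x. blinfun_apply (case x of (p, s) \<Rightarrow> Blinfun (F p s)) i) = (\<lambda>x. F (fst x) (snd x) i)"
      by (auto simp: fun_eq_iff bounded_linear_Blinfun_apply[OF bl] split: prod.splits)
    have "continuous_on ((UNIV \<times> {0<..}) \<times> {0..1}) (\<lambda>x. F (fst x) (snd x) i)"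
    proof -
      from i consider e where "e \<in> Basis" "i = (e, 0)" | "i = (0, 1)"
        by (auto simp: Basis_prod_def)
      then show ?thesis
      proof cases
        case 1
        have E: "(\<lambda>x. F (fst x) (snd x) i) = (\<lambda>x. c (snd (fst x)) (snd x) * Dd g (e,0) (Phi (snd x) (fst x)))"
          using 1 by (simp add: F_def fun_eq_iff)
        have "continuous_on UNIV (Dd g (e,0))"
          using gc 1 i by simp
        then show ?thesis unfolding E by (rule integrand_cont[OF _ c])
      next
        case 2
        have e: "Dd g (0, r) q = r * Dd g (0,1) q" for r q
        proof -
          have "(0::real^'n, r) = r *\<^sub>R (0, 1)" by simp
          then show ?thesis using linear_scale[OF Dd_linear[OF gd], of r "(0,1)" q] by simp
        qed
        have E: "(\<lambda>x. F (fst x) (snd x) i) = (\<lambda>x. ct (snd (fst x)) (snd x) * g (Phi (snd x) (fst x))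
             + (\<lambda>t s. c t s * s * t powr (-2/3)) (snd (fst x)) (snd x) * Dd g (0,1) (Phi (snd x) (fst x)))"
        proof (rule ext)
          fix x :: "((real^'n) \<times> real) \<times> real"
          show "F (fst x) (snd x) i = ct (snd (fst x)) (snd x) * g (Phi (snd x) (fst x))
             + (\<lambda>t s. c t s * s * t powr (-2/3)) (snd (fst x)) (snd x) * Dd g (0,1) (Phi (snd x) (fst x))"
            unfolding F_def 2 using e[of "snd x * snd (fst x) powr (-2/3) * 1" "Phi (snd x) (fst x)"]
            by (simp add: algebra_simps)
        qed
        have "continuous_on UNIV (Dd g (0,1))"
          using gc 2 i by simp
        then show ?thesis unfolding E
          by (intro continuous_on_add integrand_cont[OF gcont ct] integrand_cont[OF _ coef_mult_cont[OF c]])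
      qed
    qed
    then show "continuous_on (U \<times> cbox 0 1) (\<lambda>x. blinfun_apply (case x of (p, s) \<Rightarrow> Blinfun (F p s)) i)"
      unfolding eq by (simp add: U_def cbox_interval)
  qed
  have int: "(\<lambda>s. c (snd p') s * g (Phi s p')) integrable_on cbox 0 1" if "p' \<in> U" for p'
    using integrand_integrable[OF gcont c] that by (auto simp: U_def mem_Times_iff cbox_interval)
  have L: "((\<lambda>x. integral (cbox 0 1) (\<lambda>s. c (snd x) s * g (Phi s x))) has_derivative
      blinfun_apply (integral (cbox 0 1) (\<lambda>s. Blinfun (F p s)))) (at p within U)"
  proof (rule leibniz_rule[where f="\<lambda>p s. c (snd p) s * g (Phi s p)" and fx="\<lambda>p s. Blinfun (F p s)"])
    fix x t assume x: "x \<in> U"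
    show "((\<lambda>x. c (snd x) t * g (Phi t x)) has_derivative blinfun_apply (Blinfun (F x t))) (at x within U)"
      unfolding bounded_linear_Blinfun_apply[OF bl] by (rule has_derivative_at_withinI[OF hd[OF x]])
  next
    fix x assume "x \<in> U"
    then show "(\<lambda>s. c (snd x) s * g (Phi s x)) integrable_on cbox 0 1" by (rule int)
  qed (use Fc U in auto)
  have Bint: "(\<lambda>s. Blinfun (F p s)) integrable_on cbox 0 1"
  proof -
    have "continuous_on (cbox 0 1) (\<lambda>s. (\<lambda>(p, s). Blinfun (F p s)) (p, s))"
      by (rule continuous_on_compose2[OF Fc]) (use U(3) in \<open>auto intro!: continuous_intros\<close>)
    then show ?thesis by (simp add: integrable_continuous_interval integrable_continuous_real)
  qed
  have eqd: "blinfun_apply (integral (cbox 0 1) (\<lambda>s. Blinfun (F p s))) h = integral {0..1} (\<lambda>s. F p s h)" for h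
    using integral_linear[OF Bint blinfun.bounded_linear_left, of h]
    by (simp add: o_def bounded_linear_Blinfun_apply[OF bl] cbox_interval)
  show ?thesis
    using L unfolding at_within_open[OF U(3) U(1)] J_def cbox_interval
    by (rule has_derivative_eq_rhs) (simp add: fun_eq_iff eqd[unfolded cbox_interval] F_def)
qed


lemma Dd_pair0:
  assumes "g differentiable at q"
  shows "Dd g (0, r) q = r * Dd g (0,1) q"
proof -
  have "(0::real^'n, r) = r *\<^sub>R (0, 1)" by simp
  then show ?thesis using linear_scale[OF Dd_linear[OF assms], of r "(0,1)"] by simp
qed

lemma Dd_pair0':
  assumes "g differentiable at q"
  shows "Dd g (0, a * b) q = a * b * Dd g (0,1) q"
  using Dd_pair0[OF assms] by blast

lemma J_diff:
  fixes g :: "(real^'n) \<times> real \<Rightarrow> real"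
  assumes g: "Ck_on 1 UNIV g" and cc: "coef c ct" and p: "snd p > 0"
  shows "J c g differentiable at p"
  using J_deriv[OF assms] unfolding differentiable_def by blast

lemma J_partial_x:
  fixes g :: "(real^'n) \<times> real \<Rightarrow> real"
  assumes g: "Ck_on 1 UNIV g" and cc: "coef c ct" and p: "snd p > 0"
  shows "Dd (J c g) (e,0) p = J c (Dd g (e,0)) p"
  unfolding Dd_def[of "J c g"] frechet_derivative_at[OF J_deriv[OF assms], symmetric]
  by (simp add: J_def)

lemma J_partial_t:
  fixes g :: "(real^'n) \<times> real \<Rightarrow> real"
  assumes g: "Ck_on 1 UNIV g" and cc: "coef c ct" and p: "snd p > 0"
  shows "Dd (J c g) (0,1) p = J ct g p + J (\<lambda>t s. c t s * s * t powr (-2/3)) (Dd g (0,1)) p"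
proof -
  note gd = C1_facts(1)[OF g] and gcont = C1_facts(2)[OF g] and gc = C1_facts(3)[OF g]
  note c = cc[unfolded coef_def, THEN conjunct1] and ct = cc[unfolded coef_def, THEN conjunct2, THEN conjunct1]
  have b: "(0::real^'n, 1::real) \<in> Basis" by (simp add: Basis_prod_def)
  have "Dd (J c g) (0,1) p = integral {0..1} (\<lambda>s. ct (snd p) s * g (Phi s p)
      + (\<lambda>t s. c t s * s * t powr (-2/3)) (snd p) s * Dd g (0,1) (Phi s p))"
    unfolding Dd_def[of "J c g"] frechet_derivative_at[OF J_deriv[OF assms], symmetric]
    using Dd_pair0'[OF gd] by (simp add: algebra_simps)
  also have "\<dots> = J ct g p + J (\<lambda>t s. c t s * s * t powr (-2/3)) (Dd g (0,1)) p"
    unfolding J_def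
    by (rule integral_add[OF integrand_integrable[OF gcont ct p]
          integrand_integrable[OF gc[OF b] coef_mult_cont[OF c] p]])
  finally show ?thesis .
qed

lemma J_zero: "J (\<lambda>t s. 0) g p = 0"
  by (simp add: J_def)

lemma J_C1:
  fixes g :: "(real^'n) \<times> real \<Rightarrow> real"
  assumes g: "Ck_on 1 UNIV g" and cc: "coef c ct"
  shows "Ck_on 1 (UNIV \<times> {0<..}) (J c g)"
proof -
  note gd = C1_facts(1)[OF g] and gcont = C1_facts(2)[OF g] and gc = C1_facts(3)[OF g]
  note c = cc[unfolded coef_def, THEN conjunct1] and ct = cc[unfolded coef_def, THEN conjunct2, THEN conjunct1]
  have U: "open (UNIV \<times> {0<..} :: ((real^'n) \<times> real) set)" by (simp add: open_Times)
  have "continuous_on (UNIV \<times> {0<..}) (\<lambda>x. frechet_derivative (J c g) (at x) b)" if b: "b \<in> Basis" for b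
  proof -
    from b consider e where "e \<in> Basis" "b = (e, 0)" | "b = (0, 1)"
      by (auto simp: Basis_prod_def)
    then show ?thesis
    proof cases
      case 1
      have "continuous_on (UNIV \<times> {0<..}) (J c (Dd g (e,0)))"
        using J_cont[OF gc c] b 1 by simp
      then show ?thesis
        by (rule continuous_on_cong[THEN iffD1, rotated 2])
          (use J_partial_x[OF g cc] 1 in \<open>auto simp: Dd_def mem_Times_iff\<close>)
    next
      case 2
      have b2: "(0::real^'n, 1::real) \<in> Basis" by (simp add: Basis_prod_def)
      have "continuous_on (UNIV \<times> {0<..}) (\<lambda>p. J ct g p + J (\<lambda>t s. c t s * s * t powr (-2/3)) (Dd g (0,1)) p)"
        by (intro continuous_on_add J_cont[OF gcont ct] J_cont[OF gc[OF b2] coef_mult_cont[OF c]])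
      then show ?thesis
        by (rule continuous_on_cong[THEN iffD1, rotated 2])
          (use J_partial_t[OF g cc] 2 in \<open>auto simp: Dd_def mem_Times_iff\<close>)
    qed
  qed
  then show ?thesis
    using J_cont[OF gcont c] J_diff[OF g cc] by (auto simp: mem_Times_iff)
qed

lemma C2_facts:
  assumes "Ck_on 2 UNIV g" "b \<in> Basis"
  shows "Ck_on 1 UNIV (Dd g b)" "Ck_on 1 UNIV g"
  using assms by (auto simp: numeral_2_eq_2 Dd_def[abs_def])

lemma J_C2:
  fixes g :: "(real^'n) \<times> real \<Rightarrow> real"
  assumes g: "Ck_on 2 UNIV g" and cc: "coef c (\<lambda>t s. 0)"
    and cc1: "coef (\<lambda>t s. c t s * s * t powr (-2/3)) c1t"
  shows "Ck_on 2 (UNIV \<times> {0<..}) (J c g)"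
proof -
  have b2: "(0::real^'n, 1::real) \<in> Basis" by (simp add: Basis_prod_def)
  note g1 = C2_facts(2)[OF g b2]
  have U: "open (UNIV \<times> {0<..} :: ((real^'n) \<times> real) set)" by (simp add: open_Times)
  have "Ck_on 1 (UNIV \<times> {0<..}) (\<lambda>x. frechet_derivative (J c g) (at x) b)" if b: "b \<in> Basis" for b
  proof -
    from b consider e where "e \<in> Basis" "b = (e, 0)" | "b = (0, 1)"
      by (auto simp: Basis_prod_def)
    then show ?thesis
    proof cases
      case 1
      have "Ck_on 1 (UNIV \<times> {0<..}) (J c (Dd g (e,0)))"
        using J_C1[OF C2_facts(1)[OF g] cc] b 1 by simp
      then show ?thesis
        by (subst Ck_on_cong[OF U]) (use J_partial_x[OF g1 cc] 1 in \<open>auto simp: Dd_def mem_Times_iff\<close>)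
    next
      case 2
      have "Ck_on 1 (UNIV \<times> {0<..}) (J (\<lambda>t s. c t s * s * t powr (-2/3)) (Dd g (0,1)))"
        using J_C1[OF C2_facts(1)[OF g b2] cc1] by simp
      then show ?thesis
        by (subst Ck_on_cong[OF U]) (use J_partial_t[OF g1 cc] 2 in \<open>auto simp: Dd_def mem_Times_iff J_zero\<close>)
    qed
  qed
  then show ?thesis
    using J_C1[OF g1 cc] by (simp add: numeral_2_eq_2)
qed


lemma has_deriv_line:
  fixes G :: "(real^'n) \<times> real \<Rightarrow> real"
  assumes G: "G differentiable at (x + a *\<^sub>R e, b + a * k)"
  shows "((\<lambda>h. G (x + h *\<^sub>R e, b + h * k)) has_real_derivative Dd G (e, k) (x + a *\<^sub>R e, b + a * k)) (at a)"
proof -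
  have d1: "((\<lambda>h. (x + h *\<^sub>R e, b + h * k)) has_derivative (\<lambda>h. (h *\<^sub>R e, h * k))) (at a)"
    by (auto intro!: derivative_eq_intros)
  have d2: "(G has_derivative frechet_derivative G (at (x + a *\<^sub>R e, b + a * k))) (at (x + a *\<^sub>R e, b + a * k))"
    using G frechet_derivative_works by blast
  have L: "linear (\<lambda>h. Dd G h (x + a *\<^sub>R e, b + a * k))" by (rule Dd_linear[OF G])
  have e: "Dd G (h *\<^sub>R e, h * k) (x + a *\<^sub>R e, b + a * k) = h * Dd G (e, k) (x + a *\<^sub>R e, b + a * k)" for h
  proof -
    have "(h *\<^sub>R e, h * k) = h *\<^sub>R (e, k)" by simp
    then show ?thesis using linear_scale[OF L, of h "(e,k)"] by simp
  qed
  show ?thesis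
    using has_derivative_compose[OF d1 d2] unfolding has_field_derivative_def
    by (rule has_derivative_eq_rhs) (auto simp: fun_eq_iff e[unfolded Dd_def] Dd_def mult.commute)
qed

lemma deriv_t:
  fixes G :: "(real^'n) \<times> real \<Rightarrow> real"
  assumes G: "G differentiable at (x, \<tau>)"
  shows "((\<lambda>\<sigma>. G (x, \<sigma>)) has_real_derivative Dd G (0,1) (x, \<tau>)) (at \<tau>)"
    "deriv (\<lambda>\<sigma>. G (x, \<sigma>)) \<tau> = Dd G (0,1) (x, \<tau>)"
proof -
  show *: "((\<lambda>\<sigma>. G (x, \<sigma>)) has_real_derivative Dd G (0,1) (x, \<tau>)) (at \<tau>)"
    using has_deriv_line[of G x \<tau> 0 0 1] G by simp
  show "deriv (\<lambda>\<sigma>. G (x, \<sigma>)) \<tau> = Dd G (0,1) (x, \<tau>)"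
    by (rule DERIV_imp_deriv[OF *])
qed

lemma deriv_x:
  fixes G :: "(real^'n) \<times> real \<Rightarrow> real"
  assumes G: "G differentiable at (y, r)"
  shows "deriv (\<lambda>h. G (y + h *\<^sub>R e, r)) 0 = Dd G (e,0) (y, r)"
  using has_deriv_line[of G y 0 e r 0] G by (simp add: DERIV_imp_deriv)

lemma coef0: "coef (\<lambda>t s. 3/2 * (1 - s\<^sup>2)) (\<lambda>t s. 0)"
  unfolding coef_def
  by (auto intro!: continuous_intros simp: split_beta' case_prod_beta)

lemma coef1: "coef (\<lambda>t s. 3/2 * (1 - s\<^sup>2) * s * t powr (-2/3))
   (\<lambda>t s. 3/2 * (1 - s\<^sup>2) * s * (-2/3 * t powr (-5/3)))"
  unfolding coef_def
proof (intro conjI allI impI)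
  show "continuous_on ({0<..} \<times> {0..1}) (\<lambda>(t, s). 3 / 2 * (1 - s\<^sup>2) * s * (t::real) powr (- 2 / 3))"
    unfolding case_prod_beta by (intro continuous_intros continuous_on_powr) auto
  show "continuous_on ({0<..} \<times> {0..1}) (\<lambda>(t, s). 3 / 2 * (1 - s\<^sup>2) * s * (- 2 / 3 * (t::real) powr (- 5 / 3)))"
    unfolding case_prod_beta by (intro continuous_intros continuous_on_powr) auto
  fix t s :: real assume t: "0 < t"
  have "((\<lambda>t. t powr (-2/3)) has_real_derivative (-2/3) * t powr (-2/3 - 1)) (at t)"
    using t by (auto intro!: derivative_eq_intros)
  moreover have "(-2/3::real) - 1 = -5/3" by simp
  ultimately have "((\<lambda>t. t powr (-2/3)) has_real_derivative (-2/3) * t powr (-5/3)) (at t)" by simp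
  then show "((\<lambda>t. 3 / 2 * (1 - s\<^sup>2) * s * t powr (- 2 / 3)) has_real_derivative
           3 / 2 * (1 - s\<^sup>2) * s * (- 2 / 3 * t powr (- 5 / 3))) (at t)"
    by (rule DERIV_cmult)
qed


lemma alg_id:
  fixes t s \<alpha> \<beta> :: real
  assumes t: "t > 0"
  shows "3/2 * (1-s\<^sup>2) * s * (-2/3 * t powr(-5/3))  *  \<alpha> + 3/2 * (1-s\<^sup>2) * s * t powr(-2/3) * s * t powr(-2/3)  *  \<beta>
     - t powr(-4/3)  *  (3/2 * (1-s\<^sup>2) * \<beta>) + 2/t * (3/2 * (1-s\<^sup>2) * s * t powr(-2/3) * \<alpha>)
   = -(1/2) * t powr(-5/3)  *  (-4 * s * (1-s\<^sup>2) * \<alpha> + (1-s\<^sup>2)\<^sup>2 * (3 * t powr(1/3) * \<beta>))"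
proof -
  define a where "a = t powr (-2/3)"
  have 1: "t powr (-4/3) = a * a" unfolding a_def by (simp add: powr_add[symmetric])
  have "a = t powr (-5/3 + 1)" unfolding a_def by simp
  also have "\<dots> = t powr (-5/3) * t" using t by (simp only: powr_add) simp
  finally have 2: "t powr (-5/3) = a / t" using t by (simp add: field_simps)
  have "t powr (1/3) = t powr (-2/3 + 1)" by simp
  also have "\<dots> = a * t" unfolding a_def using t by (simp only: powr_add) simp
  finally have 3: "t powr (1/3) = a * t" .
  show ?thesis unfolding 1 2 3 a_def[symmetric] using t
    by (simp add: field_simps power2_eq_square)
qed

lemma transfer_deriv:
  assumes "(f has_real_derivative D) (at \<tau>)" "\<tau> > 0" "\<And>\<sigma>. \<sigma> > 0 \<Longrightarrow> f \<sigma> = g \<sigma>"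
  shows "deriv g \<tau> = D"
proof -
  have "(g has_real_derivative D) (at \<tau>)"
    by (rule has_field_derivative_transform_within_open[OF assms(1), of "{0<..}"]) (use assms in auto)
  then show ?thesis by (rule DERIV_imp_deriv)
qed

lemma int_one: "((\<lambda>s::real. 3/2 * (1 - s\<^sup>2)) has_integral 1) {0..1}"
proof -
  have "((\<lambda>s::real. 3/2 * (1 - s\<^sup>2)) has_integral ((\<lambda>s. 3/2 * (s - s^3/3)) 1 - (\<lambda>s. 3/2 * (s - s^3/3)) 0)) {0..1}"
    by (rule fundamental_theorem_of_calculus)
      (auto intro!: derivative_eq_intros simp: has_real_derivative_iff_has_vector_derivative[symmetric]
        power2_eq_square)
  then show ?thesis by simp
qed

theorem corollary2p6:
  fixes \<phi>1 :: "real^'n \<Rightarrow> real" and v :: "real^'n \<Rightarrow> real \<Rightarrow> real"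
    and \<psi> :: "real^'n \<Rightarrow> real \<Rightarrow> real"
  assumes phi_reg: "Ck_on (CARD('n) div 2 + 2) UNIV \<phi>1"
    and phi_supp: "bounded {x. \<phi>1 x \<noteq> 0}"
    and v_sol: "wave_solution \<phi>1 v"
    and psi_def: "\<And>x t. t > 0 \<Longrightarrow>
       \<psi> x t = 3/2 * integral {0..1} (\<lambda>s. v x (3 * t powr (1/3) * s) * (1 - s^2))"
  shows "Ck_on 2 (UNIV \<times> {0<..}) (\<lambda>p. \<psi> (fst p) (snd p))
    \<and> (\<forall>x. \<forall>t>0. deriv (\<lambda>\<tau>. deriv (\<lambda>\<sigma>. \<psi> x \<sigma>) \<tau>) t
                 - t powr (-4/3) * laplacian (\<lambda>y. \<psi> y t) x
                 + 2 / t * deriv (\<lambda>\<sigma>. \<psi> x \<sigma>) t = 0)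
    \<and> (\<forall>x. ((\<lambda>t. t * \<psi> x t) \<longlongrightarrow> 0) (at_right 0))
    \<and> (\<forall>x. ((\<lambda>t. t * deriv (\<lambda>\<sigma>. \<psi> x \<sigma>) t + \<psi> x t) \<longlongrightarrow> \<phi>1 x) (at_right 0))"
proof -
  define V where "V = (\<lambda>p. v (fst p) (snd p))"
  have vC2: "Ck_on 2 UNIV V" using v_sol unfolding wave_solution_def V_def by simp
  have weq: "\<And>x r. deriv (\<lambda>\<rho>. deriv (\<lambda>\<sigma>. v x \<sigma>) \<rho>) r - laplacian (\<lambda>y. v y r) x = 0"
    using v_sol unfolding wave_solution_def by blast
  have v0: "\<And>x. v x 0 = \<phi>1 x" using v_sol unfolding wave_solution_def by blast
  have vr0: "\<And>x. deriv (\<lambda>r. v x r) 0 = 0" using v_sol unfolding wave_solution_def by blast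
  define c0 :: "real \<Rightarrow> real \<Rightarrow> real" where "c0 = (\<lambda>t s. 3/2 * (1 - s\<^sup>2))"
  define c1 :: "real \<Rightarrow> real \<Rightarrow> real" where "c1 = (\<lambda>t s. 3/2 * (1 - s\<^sup>2) * s * t powr (-2/3))"
  define c1t :: "real \<Rightarrow> real \<Rightarrow> real" where "c1t = (\<lambda>t s. 3/2 * (1 - s\<^sup>2) * s * (-2/3 * t powr (-5/3)))"
  define c2 :: "real \<Rightarrow> real \<Rightarrow> real" where "c2 = (\<lambda>t s. c1 t s * s * t powr (-2/3))"
  have cc0: "coef c0 (\<lambda>t s. 0)" unfolding c0_def by (rule coef0)
  have cc1: "coef c1 c1t" unfolding c1_def c1t_def by (rule coef1)
  have c01: "(\<lambda>t s. c0 t s * s * t powr (-2/3)) = c1" by (simp add: c0_def c1_def)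
  have c0c: "continuous_on ({0<..} \<times> {0..1}) (\<lambda>(t,s). c0 t s)" using cc0 by (simp add: coef_def)
  have c1c: "continuous_on ({0<..} \<times> {0..1}) (\<lambda>(t,s). c1 t s)" using cc1 by (simp add: coef_def)
  have c1tc: "continuous_on ({0<..} \<times> {0..1}) (\<lambda>(t,s). c1t t s)" using cc1 by (simp add: coef_def)
  have c2c: "continuous_on ({0<..} \<times> {0..1}) (\<lambda>(t,s). c2 t s)"
    unfolding c2_def by (rule coef_mult_cont[OF c1c])
  define Vr where "Vr = Dd V (0,1)"
  define Vrr where "Vrr = Dd Vr (0,1)"
  define Ve where "Ve e = Dd V (e,0)" for e
  define Vee where "Vee e = Dd (Ve e) (e,0)" for e
  have b2: "(0::real^'n, 1::real) \<in> Basis" by (simp add: Basis_prod_def)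
  have be: "(axis i 1 :: real^'n, 0::real) \<in> Basis" for i by (simp add: Basis_prod_def)
  have V1: "Ck_on 1 UNIV V" using C2_facts(2)[OF vC2 b2] .
  have Vr1: "Ck_on 1 UNIV Vr" unfolding Vr_def using C2_facts(1)[OF vC2 b2] .
  have Ve1: "Ck_on 1 UNIV (Ve (axis i 1))" for i unfolding Ve_def using C2_facts(1)[OF vC2 be] .
  have Vd: "V differentiable at q" for q using C1_facts(1)[OF V1] .
  have Vrd: "Vr differentiable at q" for q using C1_facts(1)[OF Vr1] .
  have Ved: "Ve (axis i 1) differentiable at q" for i q using C1_facts(1)[OF Ve1] .
  have Vrc: "continuous_on UNIV Vr" using C1_facts(2)[OF Vr1] .
  have Vrrc: "continuous_on UNIV Vrr" unfolding Vrr_def using C1_facts(3)[OF Vr1 b2] .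
  have Veec: "continuous_on UNIV (Vee (axis i 1))" for i
    unfolding Vee_def using C1_facts(3)[OF Ve1 be] .
  have Vc: "continuous_on UNIV V" using C1_facts(2)[OF V1] .
  have U: "open (UNIV \<times> {0<..} :: ((real^'n) \<times> real) set)" by (simp add: open_Times)
  define \<Psi> where "\<Psi> = (\<lambda>p. \<psi> (fst p) (snd p))"
  have psiJ: "\<psi> x t = J c0 V (x, t)" if t: "t > 0" for x t
  proof -
    have "(\<lambda>s. c0 (snd (x, t)) s * V (Phi s (x, t))) = (\<lambda>s. 3/2 * (v x (3 * t powr (1/3) * s) * (1 - s^2)))"
      by (auto simp: fun_eq_iff c0_def V_def Phi_def)
    then show ?thesis unfolding J_def using psi_def[OF t] by simp
  qed
  have P1: "Ck_on 2 (UNIV \<times> {0<..}) \<Psi>"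
  proof -
    have "Ck_on 2 (UNIV \<times> {0<..}) (J c0 V)"
      by (rule J_C2[OF vC2 cc0]) (unfold c01, rule cc1)
    then show ?thesis
      by (subst Ck_on_cong[OF U]) (auto simp: \<Psi>_def psiJ mem_Times_iff)
  qed
  have dpsi: "deriv (\<lambda>\<sigma>. \<psi> x \<sigma>) \<tau> = J c1 Vr (x, \<tau>)" if "\<tau> > 0" for x \<tau>
  proof -
    have "((\<lambda>\<sigma>. J c0 V (x, \<sigma>)) has_real_derivative Dd (J c0 V) (0,1) (x, \<tau>)) (at \<tau>)"
      by (rule deriv_t(1)[OF J_diff[OF V1 cc0]]) (use that in simp)
    moreover have "Dd (J c0 V) (0,1) (x, \<tau>) = J c1 Vr (x, \<tau>)"
      using J_partial_t[OF V1 cc0, of "(x, \<tau>)", unfolded c01] that by (simp add: J_zero Vr_def)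
    ultimately show ?thesis
      by (intro transfer_deriv[OF _ that]) (auto simp: psiJ)
  qed
  have ddpsi: "deriv (\<lambda>\<tau>. deriv (\<lambda>\<sigma>. \<psi> x \<sigma>) \<tau>) t = J c1t Vr (x, t) + J c2 Vrr (x, t)" if "t > 0" for x t
  proof -
    have "((\<lambda>\<sigma>. J c1 Vr (x, \<sigma>)) has_real_derivative Dd (J c1 Vr) (0,1) (x, t)) (at t)"
      by (rule deriv_t(1)[OF J_diff[OF Vr1 cc1]]) (use that in simp)
    moreover have "Dd (J c1 Vr) (0,1) (x, t) = J c1t Vr (x, t) + J c2 Vrr (x, t)"
      using J_partial_t[OF Vr1 cc1, of "(x, t)"] that by (simp add: c2_def Vrr_def)
    ultimately show ?thesis
      by (intro transfer_deriv[OF _ that]) (auto simp: dpsi)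
  qed
  have wave: "Vrr q = (\<Sum>i\<in>UNIV. Vee (axis i 1) q)" for q
  proof -
    obtain y r where q: "q = (y, r)" by (cases q)
    have "deriv (\<lambda>\<sigma>. v y \<sigma>) \<rho> = Vr (y, \<rho>)" for \<rho>
      using deriv_t(2)[OF Vd, of y \<rho>] by (simp add: V_def Vr_def)
    then have A: "deriv (\<lambda>\<rho>. deriv (\<lambda>\<sigma>. v y \<sigma>) \<rho>) r = Vrr (y, r)"
      using deriv_t(2)[OF Vrd, of y r] by (simp add: Vrr_def)
    have "partial (\<lambda>y. v y r) (axis i 1) = (\<lambda>y'. Ve (axis i 1) (y', r))" for i
      using deriv_x[OF Vd] by (simp add: fun_eq_iff partial_def V_def Ve_def)
    then have B: "laplacian (\<lambda>y. v y r) y = (\<Sum>i\<in>UNIV. Vee (axis i 1) (y, r))"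
      unfolding laplacian_def using deriv_x[OF Ved] by (simp add: partial_def Vee_def)
    show ?thesis using weq[of y r] A B q by simp
  qed
  have lap: "laplacian (\<lambda>y. \<psi> y t) x = J c0 Vrr (x, t)" if t: "t > 0" for x t
  proof -
    have in1: "partial (\<lambda>y. \<psi> y t) (axis i 1) = (\<lambda>y. J c0 (Ve (axis i 1)) (y, t))" for i
    proof
      fix y
      have "partial (\<lambda>y. \<psi> y t) (axis i 1) y = deriv (\<lambda>h. J c0 V (y + h *\<^sub>R axis i 1, t)) 0"
        unfolding partial_def using t by (simp add: psiJ)
      also have "\<dots> = Dd (J c0 V) (axis i 1, 0) (y, t)"
        by (rule deriv_x[OF J_diff[OF V1 cc0]]) (use t in simp)
      also have "\<dots> = J c0 (Ve (axis i 1)) (y, t)"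
        using J_partial_x[OF V1 cc0] t by (simp add: Ve_def)
      finally show "partial (\<lambda>y. \<psi> y t) (axis i 1) y = J c0 (Ve (axis i 1)) (y, t)" .
    qed
    have in2: "partial (\<lambda>y. J c0 (Ve (axis i 1)) (y, t)) (axis i 1) x = J c0 (Vee (axis i 1)) (x, t)" for i
    proof -
      have "partial (\<lambda>y. J c0 (Ve (axis i 1)) (y, t)) (axis i 1) x = Dd (J c0 (Ve (axis i 1))) (axis i 1, 0) (x, t)"
        unfolding partial_def by (rule deriv_x[OF J_diff[OF Ve1 cc0]]) (use t in simp)
      also have "\<dots> = J c0 (Vee (axis i 1)) (x, t)"
        using J_partial_x[OF Ve1 cc0] t by (simp add: Vee_def)
      finally show ?thesis .
    qed
    have "laplacian (\<lambda>y. \<psi> y t) x = (\<Sum>i\<in>UNIV. J c0 (Vee (axis i 1)) (x, t))"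
      unfolding laplacian_def in1 in2 ..
    also have "\<dots> = integral {0..1} (\<lambda>s. \<Sum>i\<in>UNIV. c0 (snd (x, t)) s * Vee (axis i 1) (Phi s (x, t)))"
      unfolding J_def
      by (rule integral_sum[symmetric]) (use integrand_integrable[OF Veec c0c] t in auto)
    also have "\<dots> = J c0 Vrr (x, t)"
      unfolding J_def by (simp add: wave sum_distrib_left)
    finally show ?thesis .
  qed
  have P2: "deriv (\<lambda>\<tau>. deriv (\<lambda>\<sigma>. \<psi> x \<sigma>) \<tau>) t - t powr (-4/3) * laplacian (\<lambda>y. \<psi> y t) x
                 + 2 / t * deriv (\<lambda>\<sigma>. \<psi> x \<sigma>) t = 0" if t: "t > 0" for x t
  proof -
    define p where "p = (x, t)"
    have pt: "snd p > 0" using t by (simp add: p_def)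
    define h where "h s = (1 - s\<^sup>2)\<^sup>2 * Vr (Phi s p)" for s
    define h' where "h' s = -4 * s * (1-s\<^sup>2) * Vr (Phi s p) + (1-s\<^sup>2)\<^sup>2 * (3 * t powr (1/3) * Vrr (Phi s p))" for s
    have hd: "(h has_real_derivative h' s) (at s)" for s
    proof -
      have "((\<lambda>s. Vr (x + s *\<^sub>R 0, 0 + s * (3 * t powr (1/3)))) has_real_derivative
          Dd Vr (0, 3 * t powr (1/3)) (x + s *\<^sub>R 0, 0 + s * (3 * t powr (1/3)))) (at s)"
        by (rule has_deriv_line[OF Vrd])
      moreover have "Dd Vr (0, 3 * t powr (1/3)) q = 3 * t powr (1/3) * Vrr q" for q
        using Dd_pair0'[OF Vrd] by (simp add: Vrr_def)
      ultimately have "((\<lambda>s. Vr (Phi s p)) has_real_derivative 3 * t powr (1/3) * Vrr (Phi s p)) (at s)"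
        by (simp add: Phi_def p_def mult.commute)
      then show ?thesis unfolding h_def h'_def
        by (auto intro!: derivative_eq_intros simp: algebra_simps power2_eq_square)
    qed
    have hint: "(h' has_integral (h 1 - h 0)) {0..1}"
      by (rule fundamental_theorem_of_calculus)
        (auto simp: has_real_derivative_iff_has_vector_derivative[symmetric] intro: has_field_derivative_at_within hd)
    have h1: "h 1 = 0" by (simp add: h_def)
    have h0: "h 0 = 0"
    proof -
      have "Vr (x, 0) = deriv (\<lambda>r. v x r) 0"
        using deriv_t(2)[OF Vd, of x 0] by (simp add: V_def Vr_def)
      then show ?thesis by (simp add: h_def Phi_def p_def vr0)
    qed
    have I1: "((\<lambda>s. c1t (snd p) s * Vr (Phi s p)) has_integral J c1t Vr p) {0..1}"
      unfolding J_def by (rule integrable_integral[OF integrand_integrable[OF Vrc c1tc pt]])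
    have I2: "((\<lambda>s. c2 (snd p) s * Vrr (Phi s p)) has_integral J c2 Vrr p) {0..1}"
      unfolding J_def by (rule integrable_integral[OF integrand_integrable[OF Vrrc c2c pt]])
    have I3: "((\<lambda>s. c0 (snd p) s * Vrr (Phi s p)) has_integral J c0 Vrr p) {0..1}"
      unfolding J_def by (rule integrable_integral[OF integrand_integrable[OF Vrrc c0c pt]])
    have I4: "((\<lambda>s. c1 (snd p) s * Vr (Phi s p)) has_integral J c1 Vr p) {0..1}"
      unfolding J_def by (rule integrable_integral[OF integrand_integrable[OF Vrc c1c pt]])
    have HA: "((\<lambda>s. c1t (snd p) s * Vr (Phi s p) + c2 (snd p) s * Vrr (Phi s p)
        - t powr (-4/3) * (c0 (snd p) s * Vrr (Phi s p)) + 2/t * (c1 (snd p) s * Vr (Phi s p)))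
        has_integral (J c1t Vr p + J c2 Vrr p - t powr (-4/3) * J c0 Vrr p + 2/t * J c1 Vr p)) {0..1}"
      by (intro has_integral_add has_integral_diff has_integral_mult_right I1 I2 I3 I4)
    have HB: "(\<lambda>s. c1t (snd p) s * Vr (Phi s p) + c2 (snd p) s * Vrr (Phi s p)
        - t powr (-4/3) * (c0 (snd p) s * Vrr (Phi s p)) + 2/t * (c1 (snd p) s * Vr (Phi s p)))
        = (\<lambda>s. -(1/2)*t powr(-5/3) * h' s)"
    proof (rule ext)
      fix s
      show "c1t (snd p) s * Vr (Phi s p) + c2 (snd p) s * Vrr (Phi s p)
        - t powr (-4/3) * (c0 (snd p) s * Vrr (Phi s p)) + 2/t * (c1 (snd p) s * Vr (Phi s p))
        = -(1/2)*t powr(-5/3) * h' s"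
        unfolding c0_def c1_def c1t_def c2_def h'_def p_def snd_conv by (rule alg_id[OF t])
    qed
    have HC: "((\<lambda>s. -(1/2)*t powr(-5/3) * h' s) has_integral 0) {0..1}"
      using has_integral_mult_right[OF hint, of "-(1/2)*t powr(-5/3)"] unfolding h0 h1 by simp
    have "J c1t Vr p + J c2 Vrr p - t powr (-4/3) * J c0 Vrr p + 2/t * J c1 Vr p = 0"
      by (rule has_integral_unique[OF HA HC[folded HB]])
    then show ?thesis
      using ddpsi[OF t, of x] lap[OF t, of x] dpsi[OF t, of x] by (simp add: p_def)
  qed
  have P3: "((\<lambda>t. t * \<psi> x t) \<longlongrightarrow> 0) (at_right 0) \<and>
       ((\<lambda>t. t * deriv (\<lambda>\<sigma>. \<psi> x \<sigma>) t + \<psi> x t) \<longlongrightarrow> \<phi>1 x) (at_right 0)" for x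
  proof -
    define W0 where "W0 u = integral {0..1} (\<lambda>s. 3/2 * (1 - s\<^sup>2) * V (x, 3 * u * s))" for u
    define W1 where "W1 u = integral {0..1} (\<lambda>s. 3/2 * (1 - s\<^sup>2) * s * Vr (x, 3 * u * s))" for u
    have W0c: "continuous_on UNIV W0"
    proof -
      have "continuous_on (UNIV \<times> cbox 0 1) (\<lambda>(u, s). 3/2 * (1 - s\<^sup>2) * V (x, 3 * u * s))"
        unfolding case_prod_beta
        by (intro continuous_intros continuous_on_compose2[OF Vc]) auto
      from integral_continuous_on_param[OF this] show ?thesis
        by (simp add: W0_def cbox_interval)
    qed
    have W1c: "continuous_on UNIV W1"
    proof -
      have "continuous_on (UNIV \<times> cbox 0 1) (\<lambda>(u, s). 3/2 * (1 - s\<^sup>2) * s * Vr (x, 3 * u * s))"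
        unfolding case_prod_beta
        by (intro continuous_intros continuous_on_compose2[OF Vrc]) auto
      from integral_continuous_on_param[OF this] show ?thesis
        by (simp add: W1_def cbox_interval)
    qed
    have cr: "((\<lambda>t::real. t powr (1/3)) \<longlongrightarrow> 0) (at_right 0)"
    proof -
      have ev: "\<forall>\<^sub>F t in at_right 0. 0 \<le> (t::real)"
          using eventually_at_right_less[of "0::real"] by (rule eventually_mono) simp
      have "((\<lambda>t::real. t powr (1/3)) \<longlongrightarrow> 0 powr (1/3)) (at_right 0)"
        by (rule tendsto_powr'[OF tendsto_ident_at tendsto_const]) (use ev in simp)
      then show ?thesis by simp
    qed
    have L0: "((\<lambda>t. W0 (t powr (1/3))) \<longlongrightarrow> W0 0) (at_right 0)"
      using continuous_on_tendsto_compose[OF W0c cr] by simp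
    have L1: "((\<lambda>t. W1 (t powr (1/3))) \<longlongrightarrow> W1 0) (at_right 0)"
      using continuous_on_tendsto_compose[OF W1c cr] by simp
    have W00: "W0 0 = \<phi>1 x"
    proof -
      have "W0 0 = integral {0..1} (\<lambda>s. 3/2 * (1 - s\<^sup>2)) * \<phi>1 x"
        by (simp add: W0_def V_def v0)
      then show ?thesis using integral_unique[OF int_one] by simp
    qed
    have ev1: "\<forall>\<^sub>F t in at_right 0. \<psi> x t = W0 (t powr (1/3))"
      using eventually_at_right_less[of "0::real"]
    proof (rule eventually_mono)
      fix t :: real assume t: "0 < t"
      show "\<psi> x t = W0 (t powr (1/3))"
        unfolding psiJ[OF t] J_def W0_def by (simp add: c0_def Phi_def mult.assoc)
    qed
    have ev2: "\<forall>\<^sub>F t in at_right 0. t * deriv (\<lambda>\<sigma>. \<psi> x \<sigma>) t = t powr (1/3) * W1 (t powr (1/3))"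
      using eventually_at_right_less[of "0::real"]
    proof (rule eventually_mono)
      fix t :: real assume t: "0 < t"
      have e1: "(\<lambda>s. c1 (snd (x, t)) s * Vr (Phi s (x, t))) =
          (\<lambda>s. t powr (-2/3) * (3/2 * (1 - s\<^sup>2) * s * Vr (x, 3 * t powr (1/3) * s)))"
        by (auto simp: fun_eq_iff c1_def Phi_def mult_ac)
      have e2: "t * t powr (-2/3) = t powr (1/3)"
      proof -
        have "t powr (1/3) = t powr (1 + -2/3)" by simp
        also have "\<dots> = t * t powr (-2/3)" using t by (simp only: powr_add) simp
        finally show ?thesis by simp
      qed
      have "t * deriv (\<lambda>\<sigma>. \<psi> x \<sigma>) t = t * (t powr (-2/3) * W1 (t powr (1/3)))"
        unfolding dpsi[OF t] J_def e1 W1_def by simp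
      also have "\<dots> = t powr (1/3) * W1 (t powr (1/3))"
        using e2 by (simp add: mult.assoc[symmetric])
      finally show "t * deriv (\<lambda>\<sigma>. \<psi> x \<sigma>) t = t powr (1/3) * W1 (t powr (1/3))" .
    qed
    have A: "((\<lambda>t. t * W0 (t powr (1/3))) \<longlongrightarrow> 0 * W0 0) (at_right 0)"
      by (intro tendsto_mult tendsto_ident_at L0)
    have B: "((\<lambda>t. t powr (1/3) * W1 (t powr (1/3)) + W0 (t powr (1/3))) \<longlongrightarrow> 0 * W1 0 + W0 0) (at_right 0)"
      by (intro tendsto_add tendsto_mult cr L1 L0)
    have ev3: "\<forall>\<^sub>F t in at_right 0. t * \<psi> x t = t * W0 (t powr (1/3))"
      using ev1 by (rule eventually_mono) simp
    have ev4: "\<forall>\<^sub>F t in at_right 0. t * deriv (\<lambda>\<sigma>. \<psi> x \<sigma>) t + \<psi> x t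
        = t powr (1/3) * W1 (t powr (1/3)) + W0 (t powr (1/3))"
      using eventually_conj[OF ev1 ev2] by (rule eventually_mono) simp
    show ?thesis
      using A B W00 tendsto_cong[OF ev3] tendsto_cong[OF ev4] by simp
  qed
  show ?thesis
    using P1 P2 P3 unfolding \<Psi>_def by blast
qed

end
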